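(* There is a deterministic algorithm which, given an integer $k$ and $n$ elements with $3 \le k \le \log_2\log_2 n$, finds a $k$-max of the elements using $O(n^{1 + 1/(3\cdot 2^{k-2} - 1)})$ comparisons (the constant in the $O(\cdot)$ being absolute).
   Context: Model of imprecise comparisons: there are $n$ elements, each with a fixed unknown real value; we identify an element with its value. Asked to compare $x_i$ and $x_j$, the comparator answers either "$x_i \ge x_j$" or "$x_j \ge x_i$". If $|x_i-x_j|>1$ the answer is correct; if $|x_i-x_j|\le 1$ the answer is arbitrary (possibly adversarial and adaptive). An element $x$ is $k$-greater than $y$ if $x \ge y-k$. A $k$-max (of the set of all input elements) is an element that is $k$-greater than every other input element. Bounds on comparisons are worst case over inputs and comparator behaviours. *)

theory Defs
  imports Complex_Main
begin

text \<open>Deterministic comparison algorithms as decision trees over element indices.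
  Query i j t1 t2: ask the comparator about x_i and x_j; on answer "x_i >= x_j"
  continue with t1, on answer "x_j >= x_i" continue with t2.\<close>
datatype alg = Leaf nat | Query nat nat alg alg

fun wf_alg :: "nat \<Rightarrow> alg \<Rightarrow> bool" where
  "wf_alg n (Leaf m) = (m < n)"
| "wf_alg n (Query i j t1 t2) = (i < n \<and> j < n \<and> wf_alg n t1 \<and> wf_alg n t2)"

text \<open>All possible (output, number of comparisons) pairs of a run on values x, over all
  admissible comparator behaviours: an answer is forced to be correct when the two
  values differ by more than 1, and is arbitrary (adversarial, adaptive) otherwise.\<close>
fun runs :: "(nat \<Rightarrow> real) \<Rightarrow> alg \<Rightarrow> (nat \<times> nat) set" where
  "runs x (Leaf m) = {(m, 0)}"
| "runs x (Query i j t1 t2) =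
     (\<lambda>(m, c). (m, Suc c)) `
       ((if x j - x i > 1 then {} else runs x t1) \<union>
        (if x i - x j > 1 then {} else runs x t2))"

definition k_greater :: "real \<Rightarrow> real \<Rightarrow> real \<Rightarrow> bool" where
  "k_greater k y z \<longleftrightarrow> y \<ge> z - k"

definition is_k_max :: "real \<Rightarrow> nat \<Rightarrow> (nat \<Rightarrow> real) \<Rightarrow> nat \<Rightarrow> bool" where
  "is_k_max k n x m \<longleftrightarrow> m < n \<and> (\<forall>j<n. k_greater k (x m) (x j))"

end

theory Submission
  imports Defs
begin


type_synonym rec = "nat \<Rightarrow> nat \<Rightarrow> bool"

definition hoare :: "(nat \<Rightarrow> real) \<Rightarrow> alg \<Rightarrow> real \<Rightarrow> (nat \<Rightarrow> bool) \<Rightarrow> bool" where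
  "hoare x t B Q \<longleftrightarrow> (\<forall>m c. (m, c) \<in> runs x t \<longrightarrow> real c \<le> B \<and> Q m)"

lemma hoare_Leaf: "0 \<le> B \<Longrightarrow> Q m \<Longrightarrow> hoare x (Leaf m) B Q"
  by (simp add: hoare_def)

lemma hoare_Query:
  assumes "x j - x i \<le> 1 \<Longrightarrow> hoare x t1 (B - 1) Q"
    and "x i - x j \<le> 1 \<Longrightarrow> hoare x t2 (B - 1) Q"
  shows "hoare x (Query i j t1 t2) B Q"
  using assms unfolding hoare_def
  by (fastforce split: if_splits)

lemma hoare_mono: "hoare x t B Q \<Longrightarrow> B \<le> B' \<Longrightarrow> hoare x t B' Q"
  unfolding hoare_def by force

definition consis :: "(nat \<Rightarrow> real) \<Rightarrow> rec \<Rightarrow> bool" where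
  "consis x r \<longleftrightarrow> (\<forall>i j. r i j \<longrightarrow> x j \<le> x i + 1)"

definition dec :: "rec \<Rightarrow> nat \<Rightarrow> nat \<Rightarrow> bool" where
  "dec r i j \<longleftrightarrow> r i j \<noteq> r j i"

definition upd :: "rec \<Rightarrow> nat \<Rightarrow> nat \<Rightarrow> bool \<Rightarrow> rec" where
  "upd r i j b = (\<lambda>a c. if a = i \<and> c = j then b else if a = j \<and> c = i then \<not> b else r a c)"

fun rr :: "(nat \<times> nat) list \<Rightarrow> rec \<Rightarrow> (rec \<Rightarrow> alg) \<Rightarrow> alg" where
  "rr [] r k = k r"
| "rr ((i, j) # ps) r k = Query i j (rr ps (upd r i j True) k) (rr ps (upd r i j False) k)"

lemma upd_dec_same: "i \<noteq> j \<Longrightarrow> dec (upd r i j b) i j"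
  unfolding dec_def upd_def by metis

lemma upd_dec_pres: assumes "dec r a c" shows "dec (upd r i j b) a c"
proof -
  have "a \<noteq> c" using assms unfolding dec_def by blast
  then show ?thesis using assms unfolding dec_def upd_def by smt
qed

lemma upd_other: "\<not> (a = i \<and> c = j) \<Longrightarrow> \<not> (a = j \<and> c = i) \<Longrightarrow> upd r i j b a c = r a c"
  unfolding upd_def by metis

lemma upd_cons1: assumes "consis x r" "x j - x i \<le> 1" shows "consis x (upd r i j True)"
  unfolding consis_def
proof (intro allI impI)
  fix a c assume h: "upd r i j True a c"
  show "x c \<le> x a + 1"
  proof (cases "a = i \<and> c = j")
    case True then show ?thesis using assms(2) by simp
  next
    case False
    then have "r a c" using h unfolding upd_def by metis
    then show ?thesis using assms(1) unfolding consis_def by blast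
  qed
qed

lemma upd_cons2: assumes "consis x r" "x i - x j \<le> 1" shows "consis x (upd r i j False)"
  unfolding consis_def
proof (intro allI impI)
  fix a c assume h: "upd r i j False a c"
  show "x c \<le> x a + 1"
  proof (cases "a = j \<and> c = i")
    case True then show ?thesis using assms(2) by simp
  next
    case False
    then have "r a c" using h unfolding upd_def by metis
    then show ?thesis using assms(1) unfolding consis_def by blast
  qed
qed

lemma rr_hoare:
  assumes "consis x r"
    and "\<And>r'. consis x r' \<Longrightarrow> (\<forall>(i, j)\<in>set ps. i \<noteq> j \<longrightarrow> dec r' i j) \<Longrightarrow>
           (\<forall>a b. dec r a b \<longrightarrow> dec r' a b) \<Longrightarrow>
           (\<forall>a b. (a, b) \<notin> set ps \<and> (b, a) \<notin> set ps \<longrightarrow> r' a b = r a b) \<Longrightarrow>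
           hoare x (k r') B Q"
  shows "hoare x (rr ps r k) (B + real (length ps)) Q"
  using assms
proof (induction ps arbitrary: r B)
  case Nil
  have "hoare x (k r) B Q" by (rule Nil.prems(2)[OF Nil.prems(1)]) simp_all
  then show ?case by simp
next
  case (Cons p ps)
  obtain i j where p: "p = (i, j)" by (cases p)
  have step: "hoare x (rr ps (upd r i j b) k) (B + real (length ps)) Q"
    if c: "consis x (upd r i j b)" for b
  proof (rule Cons.IH[OF c])
    fix r'
    assume h1: "consis x r'" and h2: "\<forall>(i, j)\<in>set ps. i \<noteq> j \<longrightarrow> dec r' i j"
      and h3: "\<forall>a b'. dec (upd r i j b) a b' \<longrightarrow> dec r' a b'"
      and h4: "\<forall>a b'. (a, b') \<notin> set ps \<and> (b', a) \<notin> set ps \<longrightarrow> r' a b' = upd r i j b a b'"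
    have g1: "\<forall>(a, c)\<in>set (p # ps). a \<noteq> c \<longrightarrow> dec r' a c"
    proof (intro ballI)
      fix q assume q: "q \<in> set (p # ps)"
      obtain a c where qa: "q = (a, c)" by (cases q)
      show "case q of (a, c) \<Rightarrow> a \<noteq> c \<longrightarrow> dec r' a c"
      proof (cases "q = p")
        case True
        then show ?thesis using qa p upd_dec_same[of i j r b] h3 by auto
      next
        case False
        then have "q \<in> set ps" using q by simp
        then show ?thesis using h2 qa by auto
      qed
    qed
    have g2: "\<forall>a c. dec r a c \<longrightarrow> dec r' a c"
      using h3 upd_dec_pres by blast
    have g3: "\<forall>a c. (a, c) \<notin> set (p # ps) \<and> (c, a) \<notin> set (p # ps) \<longrightarrow> r' a c = r a c"
    proof (intro allI impI)
      fix a c assume "(a, c) \<notin> set (p # ps) \<and> (c, a) \<notin> set (p # ps)"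
      then have "(a, c) \<notin> set ps" "(c, a) \<notin> set ps" "\<not> (a = i \<and> c = j)" "\<not> (a = j \<and> c = i)"
        using p by auto
      then show "r' a c = r a c" using h4 upd_other by metis
    qed
    show "hoare x (k r') B Q"
      by (rule Cons.prems(2)[OF h1 g1 g2 g3])
  qed
  have c1: "x j - x i \<le> 1 \<Longrightarrow> consis x (upd r i j True)"
    using Cons.prems(1) upd_cons1 by blast
  have c2: "x i - x j \<le> 1 \<Longrightarrow> consis x (upd r i j False)"
    using Cons.prems(1) upd_cons2 by blast
  have "hoare x (Query i j (rr ps (upd r i j True) k) (rr ps (upd r i j False) k)) (B + real (length ps) + 1) Q"
    by (rule hoare_Query) (use step c1 c2 in simp_all)
  then show ?case unfolding p by (simp add: algebra_simps)
qed

lemma rr_wf: "(\<forall>(i, j)\<in>set ps. i < n \<and> j < n) \<Longrightarrow> (\<forall>r. wf_alg n (k r)) \<Longrightarrow> wf_alg n (rr ps r k)"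
  by (induction ps arbitrary: r) auto

fun pairs :: "nat list \<Rightarrow> (nat \<times> nat) list" where
  "pairs [] = []"
| "pairs (a # as) = map (Pair a) as @ pairs as"

lemma pairs_set: "(a, b) \<in> set (pairs S) \<Longrightarrow> a \<in> set S \<and> b \<in> set S"
  by (induction S) auto

lemma pairs_cover: "i \<in> set S \<Longrightarrow> j \<in> set S \<Longrightarrow> i \<noteq> j \<Longrightarrow> (i, j) \<in> set (pairs S) \<or> (j, i) \<in> set (pairs S)"
  by (induction S) auto

lemma pairs_length: "2 * real (length (pairs S)) = real (length S) * (real (length S) - 1)"
proof (induction S)
  case Nil then show ?case by simp
next
  case (Cons a S) then show ?case by (simp add: algebra_simps)
qed



definition wins :: "rec \<Rightarrow> nat list \<Rightarrow> nat \<Rightarrow> nat" where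
  "wins r S c = card {j \<in> set S. j \<noteq> c \<and> r c j}"

definition good :: "rec \<Rightarrow> nat list \<Rightarrow> nat \<Rightarrow> bool" where
  "good r S c \<longleftrightarrow> length S \<le> 2 * wins r S c + 1"

definition pick :: "nat list \<Rightarrow> rec \<Rightarrow> nat" where
  "pick S r = (if \<exists>c\<in>set S. good r S c then (SOME c. c \<in> set S \<and> good r S c) else hd S)"

lemma exists_good:
  assumes dS: "distinct S" and ne: "S \<noteq> []" and dc: "\<forall>i\<in>set S. \<forall>j\<in>set S. i \<noteq> j \<longrightarrow> dec r i j"
  shows "\<exists>c\<in>set S. good r S c"
proof (rule ccontr)
  assume nc: "\<not> (\<exists>c\<in>set S. good r S c)"
  define A where "A = set S"
  define n where "n = card A"
  have fA: "finite A" by (simp add: A_def)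
  have nlen: "n = length S" using dS by (simp add: n_def A_def distinct_card)
  define P where "P = {p \<in> A \<times> A. fst p \<noteq> snd p \<and> r (fst p) (snd p)}"
  define Qs where "Qs = {p \<in> A \<times> A. fst p \<noteq> snd p \<and> \<not> r (fst p) (snd p)}"
  define Off where "Off = {p \<in> A \<times> A. fst p \<noteq> snd p}"
  have fin: "finite P" "finite Qs" "finite Off" using fA by (auto simp: P_def Qs_def Off_def)
  have swapQ: "Qs = (\<lambda>p. (snd p, fst p)) ` P"
  proof
    show "Qs \<subseteq> (\<lambda>p. (snd p, fst p)) ` P"
    proof
      fix p assume p: "p \<in> Qs"
      then have "dec r (fst p) (snd p)" using dc by (auto simp: Qs_def A_def)
      moreover have "\<not> r (fst p) (snd p)" using p by (simp add: Qs_def)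
      ultimately have "r (snd p) (fst p)" unfolding dec_def by metis
      then have "(snd p, fst p) \<in> P" using p by (auto simp: Qs_def P_def)
      then show "p \<in> (\<lambda>p. (snd p, fst p)) ` P" by (rule rev_image_eqI) simp
    qed
    show "(\<lambda>p. (snd p, fst p)) ` P \<subseteq> Qs"
    proof
      fix q assume "q \<in> (\<lambda>p. (snd p, fst p)) ` P"
      then obtain p where p: "p \<in> P" and q: "q = (snd p, fst p)" by blast
      then have "dec r (fst p) (snd p)" using dc by (auto simp: P_def A_def)
      moreover have "r (fst p) (snd p)" using p by (simp add: P_def)
      ultimately have "\<not> r (snd p) (fst p)" unfolding dec_def by metis
      then show "q \<in> Qs" using p q by (auto simp: Qs_def P_def)
    qed
  qed
  have "inj_on (\<lambda>p. (snd p, fst p)) P" by (auto simp: inj_on_def)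
  then have cPQ: "card Qs = card P" using swapQ by (simp add: card_image)
  have "Off = P \<union> Qs" "P \<inter> Qs = {}" by (auto simp: Off_def P_def Qs_def)
  then have "card Off = card P + card Qs" using fin by (simp add: card_Un_disjoint)
  moreover have "card Off = n * n - n"
  proof -
    have "Off = A \<times> A - (\<lambda>a. (a, a)) ` A" by (auto simp: Off_def)
    moreover have "card ((\<lambda>a. (a, a)) ` A) = n" by (simp add: n_def card_image inj_on_def)
    moreover have "(\<lambda>a. (a, a)) ` A \<subseteq> A \<times> A" by auto
    ultimately show ?thesis using fA by (simp add: card_Diff_subset card_cartesian_product n_def)
  qed
  ultimately have c2: "2 * card P = n * n - n" using cPQ by simp
  have "card P = card (Sigma A (\<lambda>c. {j \<in> A. j \<noteq> c \<and> r c j}))"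
    by (rule arg_cong[where f = card]) (auto simp: P_def)
  also have "\<dots> = (\<Sum>c\<in>A. card {j \<in> A. j \<noteq> c \<and> r c j})"
    using fA by (simp add: card_SigmaI)
  also have "\<dots> = (\<Sum>c\<in>A. wins r S c)" by (simp add: wins_def A_def)
  finally have cP: "card P = (\<Sum>c\<in>A. wins r S c)" .
  have bad: "2 * wins r S c + 2 \<le> n" if c: "c \<in> A" for c
  proof -
    have "\<not> good r S c" using nc c unfolding A_def by blast
    then show ?thesis unfolding good_def nlen by linarith
  qed
  obtain c0 where "c0 \<in> A" using ne by (cases S) (auto simp: A_def)
  then have n2: "n \<ge> 2" using bad by fastforce
  have "2 * card P = (\<Sum>c\<in>A. 2 * wins r S c)" by (simp add: cP sum_distrib_left)
  also have "\<dots> \<le> (\<Sum>c\<in>A. n - 2)" by (rule sum_mono) (use bad in force)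
  also have "\<dots> = n * (n - 2)" by (simp add: n_def)
  finally have le: "n * n - n \<le> n * (n - 2)" using c2 by simp
  have "n * (n - 2) < n * (n - 1)" using n2 by (intro mult_strict_left_mono) auto
  also have "n * (n - 1) = n * n - n" by (simp add: diff_mult_distrib2)
  finally show False using le by simp
qed

lemma pick_some:
  assumes "\<exists>c\<in>set S. good r S c"
  shows "pick S r \<in> set S \<and> good r S (pick S r)"
proof -
  have "\<exists>c. c \<in> set S \<and> good r S c" using assms by blast
  then have "(SOME c. c \<in> set S \<and> good r S c) \<in> set S \<and> good r S (SOME c. c \<in> set S \<and> good r S c)"
    by (rule someI_ex)
  moreover have "pick S r = (SOME c. c \<in> set S \<and> good r S c)" using assms by (simp add: pick_def)
  ultimately show ?thesis by simp
qed

lemma pick_in: "S \<noteq> [] \<Longrightarrow> pick S r \<in> set S"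
proof (cases "\<exists>c\<in>set S. good r S c")
  case True then show ?thesis using pick_some by blast
next
  case False
  assume "S \<noteq> []"
  then have "hd S \<in> set S" by simp
  moreover have "pick S r = hd S" using False unfolding pick_def by argo
  ultimately show ?thesis by simp
qed

lemma pick_good:
  assumes "distinct S" "S \<noteq> []" "\<forall>i\<in>set S. \<forall>j\<in>set S. i \<noteq> j \<longrightarrow> dec r i j"
  shows "good r S (pick S r)"
  using pick_some exists_good[OF assms] by blast



primrec pivot :: "nat \<Rightarrow> nat \<Rightarrow> nat list \<Rightarrow> rec \<Rightarrow> (nat \<Rightarrow> rec \<Rightarrow> alg) \<Rightarrow> alg" where
  "pivot 0 s V r k = Leaf 0"
| "pivot (Suc f) s V r k = (if V = [] then Leaf 0 else
     rr (pairs (take s V)) r (\<lambda>r1. let c = pick (take s V) r1 in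
       rr (map (Pair c) (drop s V)) r1 (\<lambda>r2. let L = filter (\<lambda>j. j \<noteq> c \<and> \<not> r2 c j) V in
         if L = [] then k c r2 else pivot f s L r2 k)))"

definition Phi :: "nat \<Rightarrow> real \<Rightarrow> real" where
  "Phi s N = N * real s + 2 * N^2 / (real s + 1)"

lemma Phi_nonneg: "0 \<le> N \<Longrightarrow> 0 \<le> Phi s N"
  unfolding Phi_def by (intro add_nonneg_nonneg divide_nonneg_nonneg) auto

lemma Phi_mono: "0 \<le> l \<Longrightarrow> l \<le> N \<Longrightarrow> Phi s l \<le> Phi s N"
  unfolding Phi_def
  by (intro add_mono mult_right_mono divide_right_mono mult_left_mono power_mono) auto

lemma Phi_step:
  fixes s :: nat and N t l :: real
  assumes s1: "1 \<le> s" and t1: "1 \<le> t" and ts: "t \<le> real s" and tN: "t \<le> N"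
    and tc: "t = real s \<or> t = N"
    and l0: "0 \<le> l" and lN: "l \<le> N - (t + 1) / 2"
  shows "t * (t - 1) / 2 + (N - t) + Phi s l \<le> Phi s N"
proof -
  define a where "a = (t + 1) / 2"
  have a0: "0 \<le> N - a" using t1 tN by (simp add: a_def)
  have "Phi s l \<le> Phi s (N - a)" using l0 lN by (intro Phi_mono) (auto simp: a_def)
  moreover have diff: "Phi s N - Phi s (N - a) = real s * a + 2 * (2 * N * a - a^2) / (real s + 1)"
  proof -
    have e1: "Phi s N - Phi s (N - a) = real s * a + (2 * N^2 - 2 * (N - a)^2) / (real s + 1)"
      unfolding Phi_def by (simp add: diff_divide_distrib algebra_simps)
    have e2: "2 * N^2 - 2 * (N - a)^2 = 2 * (2 * N * a - a^2)"
      by (simp add: power2_eq_square algebra_simps)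
    show ?thesis using e1 e2 by simp
  qed
  moreover have "t * (t - 1) / 2 + (N - t) \<le> real s * a + 2 * (2 * N * a - a^2) / (real s + 1)"
    using tc
  proof
    assume ht: "t = real s"
    have E: "real s * a + 2 * (2 * N * a - a^2) / (real s + 1) - (t * (t - 1) / 2 + (N - t)) = N + 3 * real s / 2 - 1/2"
      unfolding a_def ht by (simp add: field_simps power2_eq_square)
    have "0 \<le> N + 3 * real s / 2 - 1/2" using tN t1 ht by linarith
    then have "0 \<le> real s * a + 2 * (2 * N * a - a^2) / (real s + 1) - (t * (t - 1) / 2 + (N - t))"
      using E by simp
    then show ?thesis by (simp only: diff_ge_0_iff_ge)
  next
    assume ht: "t = N"
    have "2 * N * a - a^2 = (N + 1) * (3 * N - 1) / 4" unfolding a_def ht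
      by (simp add: field_simps power2_eq_square)
    moreover have "0 \<le> (N + 1) * (3 * N - 1)" using t1 ht by simp
    ultimately have "0 \<le> 2 * N * a - a^2" by simp
    then have X0: "0 \<le> 2 * (2 * N * a - a^2) / (real s + 1)" by simp
    have E: "real s * a - (t * (t - 1) / 2 + (N - t)) = (real s - t) * (t + 1) / 2 + t"
      unfolding a_def ht by (simp add: field_simps)
    have "0 \<le> (real s - t) * (t + 1) / 2" using ts t1 by simp
    then have "0 \<le> real s * a - (t * (t - 1) / 2 + (N - t))" using E t1 by linarith
    then have "t * (t - 1) / 2 + (N - t) \<le> real s * a" by (simp only: diff_ge_0_iff_ge)
    then show ?thesis using X0 by linarith
  qed
  ultimately show ?thesis by linarith
qed

lemma dec_sym: "dec r i j \<Longrightarrow> dec r j i"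
  unfolding dec_def by metis

lemma dec_flip: "dec r i j \<Longrightarrow> \<not> r i j \<Longrightarrow> r j i"
  unfolding dec_def by metis

lemma card_filter_bound:
  assumes dV: "distinct V" and cV: "c \<in> set V" and WV: "W \<subseteq> set V - {c}"
    and sub: "set L \<subseteq> set V - {c} - W" and dL: "distinct L"
  shows "length L + 1 + card W \<le> length V"
proof -
  have fV: "finite (set V)" by simp
  have "length L = card (set L)" using dL by (simp add: distinct_card)
  also have "\<dots> \<le> card (set V - {c} - W)" using sub by (intro card_mono) auto
  also have "\<dots> = card (set V - {c}) - card W"
    using WV by (intro card_Diff_subset) (auto intro: finite_subset)
  also have "card (set V - {c}) = length V - 1" using dV cV by (simp add: distinct_card)
  finally have "length L \<le> length V - 1 - card W" .
  moreover have "card W \<le> length V - 1"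
    using WV card_mono[of "set V - {c}" W] dV cV by (simp add: distinct_card)
  moreover have "length V \<ge> 1" using cV by (cases V) auto
  ultimately show ?thesis by linarith
qed

lemma pivot_hoare:
  assumes "length V \<le> f" "distinct V" "V \<noteq> []" "1 \<le> s" "consis x r"
    and "\<And>w r'. consis x r' \<Longrightarrow> w \<in> set V \<Longrightarrow> (\<forall>z\<in>set V. x z \<le> x w + 2) \<Longrightarrow> hoare x (k w r') B Q"
  shows "hoare x (pivot f s V r k) (B + Phi s (real (length V))) Q"
  using assms
proof (induction f arbitrary: V r B)
  case 0
  then show ?case by simp
next
  case (Suc f)
  note dV = Suc.prems(2) and neV = Suc.prems(3) and s1 = Suc.prems(4)
  define S where "S = take s V"
  define T where "T = drop s V"
  define N where "N = length V"
  define t where "t = length S"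
  have tmin: "t = min s N" by (simp add: t_def S_def N_def)
  have N1: "1 \<le> N" using neV by (cases V) (auto simp: N_def)
  have t1: "1 \<le> t" using tmin s1 N1 by simp
  have dS: "distinct S" using dV by (simp add: S_def)
  have neS: "S \<noteq> []" using t1 by (auto simp: t_def)
  have dST: "set S \<inter> set T = {}" using dV unfolding S_def T_def
    by (metis append_take_drop_id distinct_append)
  have VST: "set V = set S \<union> set T" unfolding S_def T_def by (metis append_take_drop_id set_append)
  have lT: "length T = N - t" by (simp add: T_def tmin N_def)
  have lP: "2 * real (length (pairs S)) = real t * (real t - 1)" using pairs_length[of S] by (simp add: t_def)
  define K2 where "K2 = (\<lambda>c r2. let L = filter (\<lambda>j. j \<noteq> c \<and> \<not> r2 c j) V in
         if L = [] then k c r2 else pivot f s L r2 k)"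
  have unf: "pivot (Suc f) s V r k = rr (pairs S) r (\<lambda>r1. rr (map (Pair (pick S r1)) T) r1 (K2 (pick S r1)))"
    using neV by (simp add: S_def T_def K2_def Let_def)
  define B2 where "B2 = B + Phi s (real N) - real (length (pairs S)) - real (length T)"
  have main: "hoare x (rr (pairs S) r (\<lambda>r1. rr (map (Pair (pick S r1)) T) r1 (K2 (pick S r1))))
      ((B2 + real (length T)) + real (length (pairs S))) Q"
  proof (rule rr_hoare[OF Suc.prems(5)])
    fix r1
    assume c1: "consis x r1" and d1: "\<forall>(i, j)\<in>set (pairs S). i \<noteq> j \<longrightarrow> dec r1 i j"
    define c where "c = pick S r1"
    have cS: "c \<in> set S" using neS by (simp add: c_def pick_in)
    have dS1: "\<forall>i\<in>set S. \<forall>j\<in>set S. i \<noteq> j \<longrightarrow> dec r1 i j"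
    proof (intro ballI impI)
      fix i j assume "i \<in> set S" "j \<in> set S" "i \<noteq> j"
      then have "(i, j) \<in> set (pairs S) \<or> (j, i) \<in> set (pairs S)" by (rule pairs_cover)
      then show "dec r1 i j" using d1 \<open>i \<noteq> j\<close> dec_sym by fastforce
    qed
    have gd: "good r1 S c" unfolding c_def by (rule pick_good[OF dS neS dS1])
    have cT: "c \<notin> set T" using cS dST by blast
    show "hoare x (rr (map (Pair (pick S r1)) T) r1 (K2 (pick S r1))) (B2 + real (length T)) Q"
      unfolding c_def[symmetric]
    proof -
      have "hoare x (rr (map (Pair c) T) r1 (K2 c)) (B2 + real (length (map (Pair c) T))) Q"
      proof (rule rr_hoare[OF c1])
        fix r2
        assume c2: "consis x r2" and d2: "\<forall>(i, j)\<in>set (map (Pair c) T). i \<noteq> j \<longrightarrow> dec r2 i j"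
          and p2: "\<forall>a b. dec r1 a b \<longrightarrow> dec r2 a b"
          and u2: "\<forall>a b. (a, b) \<notin> set (map (Pair c) T) \<and> (b, a) \<notin> set (map (Pair c) T) \<longrightarrow> r2 a b = r1 a b"
        define L where "L = filter (\<lambda>j. j \<noteq> c \<and> \<not> r2 c j) V"
        have decV: "dec r2 c j" if "j \<in> set V" "j \<noteq> c" for j
        proof (cases "j \<in> set S")
          case True
          have "c \<noteq> j" using that(2) by simp
          then have "dec r1 c j" using dS1 cS True by simp
          then show ?thesis using p2 by simp
        next
          case False then have "j \<in> set T" using that VST by blast
          then show ?thesis using d2 that by auto
        qed
        have sameS: "r2 c j = r1 c j" if "j \<in> set S" for j
        proof -
          have "j \<notin> set T" using that dST by blast
          then have "(c, j) \<notin> set (map (Pair c) T)" by auto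
          moreover have "(j, c) \<notin> set (map (Pair c) T)" using cT by auto
          ultimately show ?thesis using u2 by blast
        qed
        define W where "W = {j \<in> set S. j \<noteq> c \<and> r1 c j}"
        have cV: "c \<in> set V" using cS VST by blast
        have WV: "W \<subseteq> set V - {c}" using VST by (auto simp: W_def)
        have subL: "set L \<subseteq> set V - {c} - W" using sameS by (auto simp: L_def W_def)
        have dL: "distinct L" using dV by (simp add: L_def)
        have cnt: "length L + 1 + card W \<le> N"
          using card_filter_bound[OF dV cV WV subL dL] by (simp add: N_def)
        have "t \<le> 2 * card W + 1" using gd by (simp add: good_def wins_def W_def t_def)
        then have h1: "real t \<le> 2 * real (card W) + 1" by simp
        have h2: "real (length L) + 1 + real (card W) \<le> real N" using cnt by simp
        have lL: "real (length L) \<le> real N - (real t + 1) / 2" using h1 h2 by (simp add: field_simps)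
        have costok: "real t * (real t - 1) / 2 + (real N - real t) + Phi s (real (length L)) \<le> Phi s (real N)"
          by (rule Phi_step) (use s1 t1 tmin lL in auto)
        have B2ge: "B + Phi s (real (length L)) \<le> B2"
          using costok lP lT t1 tmin by (simp add: B2_def)
        have Phi0: "0 \<le> Phi s (real (length L))" by (rule Phi_nonneg) simp
        show "hoare x (K2 c r2) B2 Q"
        proof (cases "L = []")
          case True
          have all: "\<forall>z\<in>set V. x z \<le> x c + 2"
          proof
            fix z assume z: "z \<in> set V"
            show "x z \<le> x c + 2"
            proof (cases "z = c")
              case True then show ?thesis by simp
            next
              case False
              then have "r2 c z" using z \<open>L = []\<close> unfolding L_def filter_empty_conv by blast
              then show ?thesis using c2 unfolding consis_def by force
            qed
          qed
          have "hoare x (k c r2) B Q" by (rule Suc.prems(6)[OF c2 cV all])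
          then have "hoare x (k c r2) B2 Q" by (rule hoare_mono) (use B2ge Phi0 in linarith)
          then show ?thesis using True by (simp add: K2_def L_def[symmetric] Let_def)
        next
          case False
          have lenL: "length L \<le> f" using cnt Suc.prems(1) by (simp add: N_def)
          have IH: "hoare x (pivot f s L r2 k) (B + Phi s (real (length L))) Q"
          proof (rule Suc.IH[OF lenL dL False s1 c2])
            fix w r' assume cr': "consis x r'" and wL: "w \<in> set L" and wmax: "\<forall>z\<in>set L. x z \<le> x w + 2"
            have wV: "w \<in> set V" and wc: "w \<noteq> c" and nr: "\<not> r2 c w" using wL by (auto simp: L_def)
            have "r2 w c" using dec_flip[OF decV[OF wV wc] nr] .
            then have xc: "x c \<le> x w + 1" using c2 unfolding consis_def by force
            have "\<forall>z\<in>set V. x z \<le> x w + 2"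
            proof
              fix z assume z: "z \<in> set V"
              show "x z \<le> x w + 2"
              proof (cases "z \<in> set L")
                case True then show ?thesis using wmax by blast
              next
                case False
                then have "z = c \<or> r2 c z" using z by (auto simp: L_def)
                then have "x z \<le> x c + 1" using c2 unfolding consis_def by force
                then show ?thesis using xc by linarith
              qed
            qed
            then show "hoare x (k w r') B Q" by (rule Suc.prems(6)[OF cr' wV])
          qed
          then have "hoare x (pivot f s L r2 k) B2 Q" by (rule hoare_mono) (use B2ge in linarith)
          then show ?thesis using False by (simp add: K2_def L_def[symmetric] Let_def)
        qed
      qed
      then show "hoare x (rr (map (Pair c) T) r1 (K2 c)) (B2 + real (length T)) Q" by simp
    qed
  qed
  have "B2 + real (length T) + real (length (pairs S)) = B + Phi s (real (length V))"
    by (simp add: B2_def N_def)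
  then show ?case using main unfolding unf by simp
qed



primrec cover :: "nat \<Rightarrow> nat \<Rightarrow> nat list \<Rightarrow> nat list \<Rightarrow> rec \<Rightarrow> (nat list \<Rightarrow> rec \<Rightarrow> alg) \<Rightarrow> alg" where
  "cover 0 g P acc r k = k (acc @ P) r"
| "cover (Suc f) g P acc r k = (if length P < g then k (acc @ P) r else
     rr (pairs (take g P)) r (\<lambda>r1. let c = pick (take g P) r1 in
       cover f g (filter (\<lambda>j. j \<noteq> c \<and> \<not> r1 c j) (take g P) @ drop g P) (c # acc) r1 k))"

lemma cover_hoare:
  assumes "length P \<le> f" "distinct P" "distinct acc" "set acc \<inter> set P = {}" "1 \<le> g" "consis x r"
    and "\<And>C r'. consis x r' \<Longrightarrow> distinct C \<Longrightarrow> set C \<subseteq> set acc \<union> set P \<Longrightarrow> set acc \<subseteq> set C \<Longrightarrow>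
          (P \<noteq> [] \<longrightarrow> C \<noteq> []) \<Longrightarrow> (\<forall>z\<in>set P. \<exists>c\<in>set C. x z \<le> x c + 1) \<Longrightarrow>
          real (length C) \<le> real (length acc) + 2 * real (length P) / (real g + 1) + real g \<Longrightarrow>
          hoare x (k C r') B Q"
  shows "hoare x (cover f g P acc r k) (B + (real g - 1) * real (length P)) Q"
  using assms
proof (induction f arbitrary: P acc r B)
  case 0
  then have P0: "P = []" by simp
  have "hoare x (k (acc @ P) r) B Q"
    by (rule "0.prems"(7)[OF "0.prems"(6)]) (use "0.prems"(3) P0 in auto)
  then show ?case using P0 by simp
next
  case (Suc f)
  note dP = Suc.prems(2) and dacc = Suc.prems(3) and disj = Suc.prems(4) and g1 = Suc.prems(5)
  show ?case
  proof (cases "length P < g")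
    case True
    have "hoare x (k (acc @ P) r) B Q"
    proof (rule Suc.prems(7)[OF Suc.prems(6)])
      show "distinct (acc @ P)" using dP dacc disj by simp
      show "set (acc @ P) \<subseteq> set acc \<union> set P" by simp
      show "set acc \<subseteq> set (acc @ P)" by simp
      show "P \<noteq> [] \<longrightarrow> acc @ P \<noteq> []" by simp
      show "\<forall>z\<in>set P. \<exists>c\<in>set (acc @ P). x z \<le> x c + 1" by force
      have "real (length P) \<le> real g" using True by simp
      moreover have "0 \<le> 2 * real (length P) / (real g + 1)" by simp
      moreover have "real (length (acc @ P)) = real (length acc) + real (length P)" by simp
      ultimately show "real (length (acc @ P)) \<le> real (length acc) + 2 * real (length P) / (real g + 1) + real g"
        by linarith
    qed
    moreover have "0 \<le> (real g - 1) * real (length P)" using g1 by simp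
    ultimately have "hoare x (k (acc @ P) r) (B + (real g - 1) * real (length P)) Q"
      using hoare_mono by (metis le_add_same_cancel1)
    then show ?thesis using True by simp
  next
    case False
    define G where "G = take g P"
    define R where "R = drop g P"
    have lG: "length G = g" using False by (simp add: G_def)
    have dG: "distinct G" using dP by (simp add: G_def)
    have neG: "G \<noteq> []" using lG g1 by auto
    have dGR: "set G \<inter> set R = {}" using dP unfolding G_def R_def
      by (metis append_take_drop_id distinct_append)
    have PGR: "set P = set G \<union> set R" unfolding G_def R_def by (metis append_take_drop_id set_append)
    have dR: "distinct R" using dP by (simp add: R_def)
    have lR: "length R = length P - g" by (simp add: R_def)
    have lP: "2 * real (length (pairs G)) = real g * (real g - 1)" using pairs_length[of G] lG by simp
    define K where "K = (\<lambda>r1. let c = pick G r1 in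
       cover f g (filter (\<lambda>j. j \<noteq> c \<and> \<not> r1 c j) G @ R) (c # acc) r1 k)"
    have unf: "cover (Suc f) g P acc r k = rr (pairs G) r K"
      using False by (simp add: G_def R_def K_def)
    define B1 where "B1 = B + (real g - 1) * real (length P) - real (length (pairs G))"
    have "hoare x (rr (pairs G) r K) (B1 + real (length (pairs G))) Q"
    proof (rule rr_hoare[OF Suc.prems(6)])
      fix r1
      assume c1: "consis x r1" and d1: "\<forall>(i, j)\<in>set (pairs G). i \<noteq> j \<longrightarrow> dec r1 i j"
      define c where "c = pick G r1"
      have cG: "c \<in> set G" using neG by (simp add: c_def pick_in)
      have dG1: "\<forall>i\<in>set G. \<forall>j\<in>set G. i \<noteq> j \<longrightarrow> dec r1 i j"
      proof (intro ballI impI)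
        fix i j assume "i \<in> set G" "j \<in> set G" "i \<noteq> j"
        then have "(i, j) \<in> set (pairs G) \<or> (j, i) \<in> set (pairs G)" by (rule pairs_cover)
        then show "dec r1 i j" using d1 \<open>i \<noteq> j\<close> dec_sym by fastforce
      qed
      have gd: "good r1 G c" unfolding c_def by (rule pick_good[OF dG neG dG1])
      define F where "F = filter (\<lambda>j. j \<noteq> c \<and> \<not> r1 c j) G"
      define P' where "P' = F @ R"
      define W where "W = {j \<in> set G. j \<noteq> c \<and> r1 c j}"
      have WG: "W \<subseteq> set G - {c}" by (auto simp: W_def)
      have subF: "set F \<subseteq> set G - {c} - W" by (auto simp: F_def W_def)
      have dF: "distinct F" using dG by (simp add: F_def)
      have cnt: "length F + 1 + card W \<le> g"
        using card_filter_bound[OF dG cG WG subF dF] lG by simp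
      have "g \<le> 2 * card W + 1" using gd lG by (simp add: good_def wins_def W_def)
      then have h1: "real g \<le> 2 * real (card W) + 1" by simp
      have h2: "real (length F) + 1 + real (card W) \<le> real g" using cnt by simp
      have lP'eq: "real (length P') = real (length F) + real (length P) - real g"
        using lR False by (simp add: P'_def)
      have lP': "real (length P') \<le> real (length P) - (real g + 1) / 2"
        using h1 h2 lP'eq by (simp add: field_simps)
      have lenP': "length P' \<le> f" using lP' Suc.prems(1) by (simp add: field_simps)
      have FG: "set F \<subseteq> set G" by (auto simp: F_def)
      have cF: "c \<notin> set F" by (simp add: F_def)
      have cR: "c \<notin> set R" using cG dGR by blast
      have dP': "distinct P'" using dF dR dGR FG by (auto simp: P'_def)
      have cacc: "c \<notin> set acc" using cG PGR disj by blast
      have dacc': "distinct (c # acc)" using cacc dacc by simp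
      have P'P: "set P' \<subseteq> set P" using FG PGR by (auto simp: P'_def)
      have disj': "set (c # acc) \<inter> set P' = {}" using cF cR P'P disj by (auto simp: P'_def)
      have costeq: "(real g - 1) * real (length P') + real (length (pairs G)) \<le> (real g - 1) * real (length P)"
      proof -
        have "(real g - 1) * real (length P') \<le> (real g - 1) * (real (length P) - (real g + 1) / 2)"
          using lP' g1 by (intro mult_left_mono) auto
        moreover have "(real g - 1) * (real (length P) - (real g + 1) / 2) + real g * (real g - 1) / 2
            = (real g - 1) * real (length P) - (real g - 1) / 2"
          by (simp add: field_simps)
        moreover have "real (length (pairs G)) = real g * (real g - 1) / 2" using lP by simp
        moreover have "0 \<le> (real g - 1) / 2" using g1 by simp
        ultimately show ?thesis by linarith
      qed
      have IH: "hoare x (cover f g P' (c # acc) r1 k) (B + (real g - 1) * real (length P')) Q"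
      proof (rule Suc.IH[OF lenP' dP' dacc' disj' g1 c1])
        fix C r'
        assume cr: "consis x r'" and dC: "distinct C" and sC: "set C \<subseteq> set (c # acc) \<union> set P'"
          and aC: "set (c # acc) \<subseteq> set C" and neC: "P' \<noteq> [] \<longrightarrow> C \<noteq> []"
          and cov: "\<forall>z\<in>set P'. \<exists>c\<in>set C. x z \<le> x c + 1"
          and lC: "real (length C) \<le> real (length (c # acc)) + 2 * real (length P') / (real g + 1) + real g"
        show "hoare x (k C r') B Q"
        proof (rule Suc.prems(7)[OF cr dC])
          show "set C \<subseteq> set acc \<union> set P" using sC cG PGR P'P by auto
          show "set acc \<subseteq> set C" using aC by simp
          show "P \<noteq> [] \<longrightarrow> C \<noteq> []" using aC by auto
          have cC: "c \<in> set C" using aC by simp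
          show "\<forall>z\<in>set P. \<exists>c\<in>set C. x z \<le> x c + 1"
          proof
            fix z assume z: "z \<in> set P"
            show "\<exists>c\<in>set C. x z \<le> x c + 1"
            proof (cases "z \<in> set P'")
              case True then show ?thesis using cov by blast
            next
              case False
              then have "z \<in> set G" "z \<notin> set F" using z PGR by (auto simp: P'_def)
              then have "z = c \<or> r1 c z" by (auto simp: F_def)
              then have "x z \<le> x c + 1" using c1 unfolding consis_def by force
              then show ?thesis using cC by blast
            qed
          qed
          have "2 * real (length P') / (real g + 1) \<le> 2 * (real (length P) - (real g + 1) / 2) / (real g + 1)"
            using lP' by (intro divide_right_mono) (auto simp: field_simps)
          also have "\<dots> = 2 * real (length P) / (real g + 1) - 1" by (simp add: field_simps)
          finally show "real (length C) \<le> real (length acc) + 2 * real (length P) / (real g + 1) + real g"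
            using lC by simp
        qed
      qed
      have "B + (real g - 1) * real (length P') \<le> B1"
        using costeq by (simp add: B1_def)
      then have "hoare x (cover f g P' (c # acc) r1 k) B1 Q" by (rule hoare_mono[OF IH])
      then show "hoare x (K r1) B1 Q" by (simp add: K_def c_def[symmetric] F_def[symmetric] P'_def Let_def)
    qed
    then show ?thesis unfolding unf by (simp add: B1_def)
  qed
qed



lemma level_bound:
  fixes N M D' G :: real
  assumes N: "1024 \<le> N" and D': "2 \<le> D'"
    and g1: "6 * N powr (1 / (2 * D' + 1)) \<le> G" and g2: "G \<le> 6 * N powr (1 / (2 * D' + 1)) + 1"
    and M0: "0 \<le> M" and M: "M \<le> 2 * N / (G + 1) + G"
  shows "(G - 1) * N + 128 * M powr (1 + 1 / D') \<le> 128 * N powr (1 + 1 / (2 * D' + 1))"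
proof -
  define D where "D = 2 * D' + 1"
  have D5: "5 \<le> D" using D' by (simp add: D_def)
  define a where "a = N powr (1 / D)"
  define u where "u = N powr (1 / 5)"
  have N1: "1 \<le> N" using N by simp
  have a1: "1 \<le> a" unfolding a_def using N1 D5 by (simp add: ge_one_powr_ge_zero)
  have au: "a \<le> u" unfolding a_def u_def using N1 D5
    by (intro powr_mono) (auto simp: divide_simps)
  have u5: "u ^ 5 = N" unfolding u_def using N1
    by (simp add: powr_realpow[symmetric] powr_powr)
  have u4: "4 \<le> u"
  proof -
    have "(1024::real) powr (1/5) = 4"
    proof -
      have "(1024::real) = 4 powr 5" by simp
      then have "(1024::real) powr (1/5) = (4 powr 5) powr (1/5)" by simp
      also have "\<dots> = 4" by (simp add: powr_powr)
      finally show ?thesis .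
    qed
    moreover have "(1024::real) powr (1/5) \<le> N powr (1/5)" using N by (intro powr_mono2) auto
    ultimately show ?thesis by (simp add: u_def)
  qed
  have key: "36 * a^2 + 6 * a \<le> N"
  proof -
    have "36 * a^2 + 6 * a \<le> 36 * u^2 + 6 * u"
      using au a1 by (intro add_mono mult_left_mono power_mono) auto
    also have "\<dots> \<le> 42 * u^2" using u4 by (simp add: power2_eq_square)
    also have "\<dots> \<le> u^3 * u^2"
    proof -
      have "(42::real) \<le> 4^3" by simp
      also have "\<dots> \<le> u^3" using u4 by (intro power_mono) auto
      finally show ?thesis by (intro mult_right_mono) auto
    qed
    also have "\<dots> = N" using u5 by (simp add: power_add[symmetric])
    finally show ?thesis .
  qed
  have a0: "0 < a" using a1 by simp
  have G6: "6 * a \<le> G" using g1 by (simp add: a_def D_def)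
  have G6': "G \<le> 6 * a + 1" using g2 by (simp add: a_def D_def)
  have t1: "2 * N / (G + 1) \<le> N / (3 * a)"
  proof -
    have "2 * N / (G + 1) \<le> 2 * N / (6 * a)"
      using G6 a0 N1 by (intro divide_left_mono) auto
    also have "\<dots> = N / (3 * a)" by simp
    finally show ?thesis .
  qed
  have t2: "G \<le> N / (6 * a)"
  proof -
    have "(6 * a + 1) * (6 * a) \<le> N" using key by (simp add: power2_eq_square algebra_simps)
    then have "6 * a + 1 \<le> N / (6 * a)" using a0 by (simp add: field_simps)
    then show ?thesis using G6' by linarith
  qed
  have MN: "M \<le> N / (2 * a)"
  proof -
    have "N / (3 * a) + N / (6 * a) = N / (2 * a)" using a0 by (simp add: field_simps)
    then show ?thesis using M t1 t2 by linarith
  qed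
  define e' where "e' = 1 + 1 / D'"
  have e'1: "1 \<le> e'" using D' by (simp add: e'_def)
  have Na: "N / a = N powr (1 - 1 / D)"
    unfolding a_def using N1 by (simp add: powr_diff)
  have expo: "(1 - 1 / D) * e' = 1 + 1 / D"
  proof -
    have p: "0 < D' * (2 * D' + 1)" using D' by (intro mult_pos_pos) auto
    have q: "D' + D' * (D' * 2) = D' * (2 * D' + 1)" by (simp add: algebra_simps)
    have h0: "D' \<noteq> 0" "2 * D' + 1 \<noteq> 0" "D' + D' * (D' * 2) \<noteq> 0" "D' * (2 * D' + 1) \<noteq> 0"
      using D' p q by auto
    have "(1 - 1 / (2 * D' + 1)) * (1 + 1 / D') = (2 * D' / (2 * D' + 1)) * ((D' + 1) / D')"
      using h0 by (simp add: field_simps)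
    also have "\<dots> = (2 * D' + 2) / (2 * D' + 1)" using h0 by (simp add: field_simps)
    also have "\<dots> = 1 + 1 / (2 * D' + 1)" using h0 by (simp add: field_simps)
    finally show ?thesis unfolding e'_def D_def .
  qed
  have "M powr e' \<le> (N / (2 * a)) powr e'"
    using M0 MN e'1 by (intro powr_mono2) auto
  also have "\<dots> = (N / a) powr e' / 2 powr e'"
  proof -
    have e: "N / (2 * a) = (N / a) / 2" by simp
    show ?thesis unfolding e by (rule powr_divide)
  qed
  also have "\<dots> \<le> (N / a) powr e' / 2"
  proof -
    have "(2::real) \<le> 2 powr e'"
    proof -
      have "(2::real) powr 1 \<le> 2 powr e'" using e'1 by (intro powr_mono) auto
      then show ?thesis by simp
    qed
    then show ?thesis by (intro divide_left_mono) auto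
  qed
  also have "(N / a) powr e' = N powr (1 + 1 / D)"
    unfolding Na using N1 by (simp add: powr_powr expo)
  finally have Mb: "M powr e' \<le> N powr (1 + 1 / D) / 2" .
  have "(G - 1) * N \<le> 6 * a * N" using G6' N1 by (intro mult_right_mono) auto
  also have "6 * a * N = 6 * N powr (1 + 1 / D)"
    unfolding a_def using N1 by (simp add: powr_add)
  finally have Gb: "(G - 1) * N \<le> 6 * N powr (1 + 1 / D)" .
  have "0 \<le> N powr (1 + 1 / D)" by simp
  then show ?thesis using Mb Gb unfolding e'_def D_def by linarith
qed

lemma small_bound:
  fixes N D :: real
  assumes N1: "1 \<le> N" and D: "2 \<le> D"
  shows "N powr (3/2) \<le> sqrt N * N powr (1 + 1 / D)"
proof -
  have "N powr (3/2) = N powr (1 + 1 / D) * N powr (1/2 - 1/D)"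
    using N1 by (simp add: powr_add[symmetric])
  also have "N powr (1/2 - 1/D) \<le> N powr (1/2)"
    using N1 D by (intro powr_mono) auto
  also have "N powr (1/2) = sqrt N" using N1 by (simp add: powr_half_sqrt)
  finally show ?thesis using N1 by (simp add: mult.commute mult_left_mono)
qed



lemma wf_pivot:
  "0 < n \<Longrightarrow> 1 \<le> s \<Longrightarrow> set V \<subseteq> {..<n} \<Longrightarrow> (\<forall>w r. w < n \<longrightarrow> wf_alg n (k w r)) \<Longrightarrow>
   wf_alg n (pivot f s V r k)"
proof (induction f arbitrary: V r)
  case 0 then show ?case by simp
next
  case (Suc f)
  show ?case
  proof (cases "V = []")
    case True then show ?thesis using Suc.prems by simp
  next
    case False
    have neS: "take s V \<noteq> []" using False Suc.prems(2) by simp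
    have sS: "set (take s V) \<subseteq> {..<n}" using Suc.prems(3) by (meson order_trans set_take_subset)
    have sT: "set (drop s V) \<subseteq> {..<n}" using Suc.prems(3) by (meson order_trans set_drop_subset)
    have "wf_alg n (rr (pairs (take s V)) r (\<lambda>r1. let c = pick (take s V) r1 in
       rr (map (Pair c) (drop s V)) r1 (\<lambda>r2. let L = filter (\<lambda>j. j \<noteq> c \<and> \<not> r2 c j) V in
         if L = [] then k c r2 else pivot f s L r2 k)))"
    proof (rule rr_wf)
      show "\<forall>(i, j)\<in>set (pairs (take s V)). i < n \<and> j < n" using sS pairs_set by fastforce
      show "\<forall>r1. wf_alg n (let c = pick (take s V) r1 in
       rr (map (Pair c) (drop s V)) r1 (\<lambda>r2. let L = filter (\<lambda>j. j \<noteq> c \<and> \<not> r2 c j) V in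
         if L = [] then k c r2 else pivot f s L r2 k))"
      proof
        fix r1
        define c where "c = pick (take s V) r1"
        have cn: "c < n" using pick_in[OF neS] sS by (auto simp: c_def)
        have "wf_alg n (rr (map (Pair c) (drop s V)) r1 (\<lambda>r2. let L = filter (\<lambda>j. j \<noteq> c \<and> \<not> r2 c j) V in
         if L = [] then k c r2 else pivot f s L r2 k))"
        proof (rule rr_wf)
          show "\<forall>(i, j)\<in>set (map (Pair c) (drop s V)). i < n \<and> j < n" using cn sT by auto
          show "\<forall>r2. wf_alg n (let L = filter (\<lambda>j. j \<noteq> c \<and> \<not> r2 c j) V in
            if L = [] then k c r2 else pivot f s L r2 k)"
          proof
            fix r2
            have "set (filter (\<lambda>j. j \<noteq> c \<and> \<not> r2 c j) V) \<subseteq> {..<n}" using Suc.prems(3) by auto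
            then have "wf_alg n (pivot f s (filter (\<lambda>j. j \<noteq> c \<and> \<not> r2 c j) V) r2 k)"
              using Suc.IH Suc.prems(1,2,4) by blast
            then show "wf_alg n (let L = filter (\<lambda>j. j \<noteq> c \<and> \<not> r2 c j) V in
              if L = [] then k c r2 else pivot f s L r2 k)"
              using cn Suc.prems(4) by (simp add: Let_def)
          qed
        qed
        then show "wf_alg n (let c = pick (take s V) r1 in
         rr (map (Pair c) (drop s V)) r1 (\<lambda>r2. let L = filter (\<lambda>j. j \<noteq> c \<and> \<not> r2 c j) V in
           if L = [] then k c r2 else pivot f s L r2 k))" unfolding c_def Let_def .
      qed
    qed
    then show ?thesis using False by simp
  qed
qed

lemma wf_cover:
  "1 \<le> g \<Longrightarrow> set P \<subseteq> {..<n} \<Longrightarrow> set acc \<subseteq> {..<n} \<Longrightarrow>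
   (\<forall>C r. set C \<subseteq> {..<n} \<longrightarrow> wf_alg n (k C r)) \<Longrightarrow> wf_alg n (cover f g P acc r k)"
proof (induction f arbitrary: P acc r)
  case 0 then show ?case by simp
next
  case (Suc f)
  show ?case
  proof (cases "length P < g")
    case True then show ?thesis using Suc.prems by simp
  next
    case False
    have neG: "take g P \<noteq> []" using False Suc.prems(1) by auto
    have sG: "set (take g P) \<subseteq> {..<n}" using Suc.prems(2) by (meson order_trans set_take_subset)
    have sR: "set (drop g P) \<subseteq> {..<n}" using Suc.prems(2) by (meson order_trans set_drop_subset)
    have "wf_alg n (rr (pairs (take g P)) r (\<lambda>r1. let c = pick (take g P) r1 in
       cover f g (filter (\<lambda>j. j \<noteq> c \<and> \<not> r1 c j) (take g P) @ drop g P) (c # acc) r1 k))"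
    proof (rule rr_wf)
      show "\<forall>(i, j)\<in>set (pairs (take g P)). i < n \<and> j < n" using sG pairs_set by fastforce
      show "\<forall>r1. wf_alg n (let c = pick (take g P) r1 in
       cover f g (filter (\<lambda>j. j \<noteq> c \<and> \<not> r1 c j) (take g P) @ drop g P) (c # acc) r1 k)"
      proof
        fix r1
        define c where "c = pick (take g P) r1"
        have cn: "c < n" using pick_in[OF neG] sG by (auto simp: c_def)
        have "set (filter (\<lambda>j. j \<noteq> c \<and> \<not> r1 c j) (take g P) @ drop g P) \<subseteq> {..<n}" using sG sR by auto
        moreover have "set (c # acc) \<subseteq> {..<n}" using cn Suc.prems(3) by auto
        ultimately have "wf_alg n (cover f g (filter (\<lambda>j. j \<noteq> c \<and> \<not> r1 c j) (take g P) @ drop g P) (c # acc) r1 k)"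
          using Suc.IH Suc.prems(1,4) by blast
        then show "wf_alg n (let c = pick (take g P) r1 in
          cover f g (filter (\<lambda>j. j \<noteq> c \<and> \<not> r1 c j) (take g P) @ drop g P) (c # acc) r1 k)"
          by (simp add: c_def Let_def)
      qed
    qed
    then show ?thesis using False by simp
  qed
qed

definition dd :: "nat \<Rightarrow> real" where
  "dd j = 3 * 2 ^ (j - 2) - 1"

definition gg :: "nat \<Rightarrow> nat \<Rightarrow> nat" where
  "gg j N = max 1 (nat \<lceil>6 * real N powr (1 / dd j)\<rceil>)"

definition pv :: "nat list \<Rightarrow> rec \<Rightarrow> (nat \<Rightarrow> rec \<Rightarrow> alg) \<Rightarrow> alg" where
  "pv V r k = pivot (length V) (max 1 (nat \<lceil>sqrt (real (length V))\<rceil>)) V r k"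

primrec algo :: "nat \<Rightarrow> nat list \<Rightarrow> rec \<Rightarrow> (nat \<Rightarrow> rec \<Rightarrow> alg) \<Rightarrow> alg" where
  "algo 0 V r k = pv V r k"
| "algo (Suc j) V r k = (if Suc j \<le> 2 \<or> length V < 1024 then pv V r k
     else cover (length V) (gg (Suc j) (length V)) V [] r (\<lambda>C r1. algo j C r1 k))"

lemma wf_pv: "0 < n \<Longrightarrow> set V \<subseteq> {..<n} \<Longrightarrow> (\<forall>w r. w < n \<longrightarrow> wf_alg n (k w r)) \<Longrightarrow> wf_alg n (pv V r k)"
  unfolding pv_def by (rule wf_pivot) auto

lemma wf_algo: "0 < n \<Longrightarrow> set V \<subseteq> {..<n} \<Longrightarrow> (\<forall>w r. w < n \<longrightarrow> wf_alg n (k w r)) \<Longrightarrow> wf_alg n (algo j V r k)"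
proof (induction j arbitrary: V r)
  case 0 then show ?case by (simp add: wf_pv)
next
  case (Suc j)
  have "wf_alg n (cover (length V) (gg (Suc j) (length V)) V [] r (\<lambda>C r1. algo j C r1 k))"
    by (rule wf_cover) (use Suc in \<open>auto simp: gg_def\<close>)
  then show ?case using Suc.prems by (simp add: wf_pv)
qed

lemma pv_cost:
  fixes N :: real
  assumes "1 \<le> N"
  shows "Phi (max 1 (nat \<lceil>sqrt N\<rceil>)) N \<le> 4 * N powr (3/2)"
proof -
  define q where "q = sqrt N"
  have q1: "1 \<le> q" using assms by (simp add: q_def)
  define s where "s = max 1 (nat \<lceil>q\<rceil>)"
  have c1: "(1::int) \<le> \<lceil>q\<rceil>" using q1 by (simp add: one_le_ceiling)
  then have "1 \<le> nat \<lceil>q\<rceil>" by linarith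
  then have "s = nat \<lceil>q\<rceil>" unfolding s_def by (simp add: max_def)
  then have sq: "real s = real_of_int \<lceil>q\<rceil>" using c1 by simp
  have s1: "q \<le> real s" using sq by linarith
  have s2: "real s \<le> q + 1" using sq by linarith
  have Nq: "N = q * q" using assms by (simp add: q_def)
  have "N * real s \<le> N * (q + 1)" using s2 assms by (intro mult_left_mono) auto
  also have "\<dots> \<le> 2 * (N * q)" using q1 assms Nq by (simp add: algebra_simps)
  finally have A: "N * real s \<le> 2 * (N * q)" .
  have "2 * N^2 / (real s + 1) \<le> 2 * N^2 / q"
    using s1 q1 by (intro divide_left_mono) auto
  also have "\<dots> = 2 * (N * q)" using Nq q1 by (simp add: power2_eq_square field_simps)
  finally have B: "2 * N^2 / (real s + 1) \<le> 2 * (N * q)" .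
  have "N powr (3/2) = N * q"
  proof -
    have "N powr (3/2) = N powr (1 + 1/2)" by simp
    also have "\<dots> = N powr 1 * N powr (1/2)" using assms by (simp only: powr_add)
    also have "\<dots> = N * q" using assms by (simp add: q_def powr_half_sqrt)
    finally show ?thesis .
  qed
  then show ?thesis using A B unfolding Phi_def s_def q_def by simp
qed



lemma pv_hoare:
  assumes "distinct V" "V \<noteq> []" "consis x r"
    and "\<And>w r'. consis x r' \<Longrightarrow> w \<in> set V \<Longrightarrow> (\<forall>z\<in>set V. x z \<le> x w + 2) \<Longrightarrow> hoare x (k w r') B Q"
  shows "hoare x (pv V r k) (B + 4 * real (length V) powr (3/2)) Q"
proof -
  define s where "s = max 1 (nat \<lceil>sqrt (real (length V))\<rceil>)"
  have H: "hoare x (pivot (length V) s V r k) (B + Phi s (real (length V))) Q"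
    by (rule pivot_hoare) (use assms in \<open>auto simp: s_def\<close>)
  have P: "Phi s (real (length V)) \<le> 4 * real (length V) powr (3/2)"
    unfolding s_def using assms(2) by (intro pv_cost) (cases V, auto)
  show ?thesis unfolding pv_def s_def[symmetric]
    by (rule hoare_mono[OF H]) (use P in simp)
qed

lemma dd_ge2: "2 \<le> j \<Longrightarrow> 2 \<le> dd j"
proof -
  assume "2 \<le> j"
  have "(1::real) \<le> 2 ^ (j - 2)" by simp
  then show ?thesis by (simp add: dd_def)
qed

lemma dd_Suc: "2 \<le> j \<Longrightarrow> dd (Suc j) = 2 * dd j + 1"
proof -
  assume "2 \<le> j"
  then have "Suc j - 2 = Suc (j - 2)" by simp
  then show ?thesis by (simp add: dd_def)
qed

lemma dd_2: "dd 2 = 2"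
  by (simp add: dd_def)

lemma gg_bounds:
  assumes "1 \<le> N"
  shows "6 * real N powr (1 / dd j) \<le> real (gg j N)" "real (gg j N) \<le> 6 * real N powr (1 / dd j) + 1"
    "1 \<le> gg j N"
proof -
  define y where "y = 6 * real N powr (1 / dd j)"
  have y0: "0 < y" using assms by (simp add: y_def)
  have c0: "0 \<le> \<lceil>y\<rceil>" using y0 by (simp add: ceiling_le_zero less_le_not_le)
  have r: "real (nat \<lceil>y\<rceil>) = real_of_int \<lceil>y\<rceil>" using c0 by simp
  have "1 \<le> \<lceil>y\<rceil>" using y0 by (simp add: one_le_ceiling)
  then have "1 \<le> nat \<lceil>y\<rceil>" by (simp add: le_nat_iff)
  then have g: "gg j N = nat \<lceil>y\<rceil>" unfolding gg_def y_def[symmetric] by (simp add: max_def)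
  show "6 * real N powr (1 / dd j) \<le> real (gg j N)" using g r by (simp add: y_def[symmetric])
  show "real (gg j N) \<le> 6 * real N powr (1 / dd j) + 1" using g r by (simp add: y_def[symmetric])
  show "1 \<le> gg j N" using g \<open>1 \<le> nat \<lceil>y\<rceil>\<close> by simp
qed

lemma algo_hoare:
  assumes "2 \<le> j" "distinct V" "V \<noteq> []" "consis x r"
    and "\<And>w r'. consis x r' \<Longrightarrow> w \<in> set V \<Longrightarrow> (\<forall>z\<in>set V. x z \<le> x w + real j) \<Longrightarrow> hoare x (k w r') B Q"
  shows "hoare x (algo j V r k) (B + 128 * real (length V) powr (1 + 1 / dd j)) Q"
  using assms
proof (induction j arbitrary: V r B)
  case 0 then show ?case by simp
next
  case (Suc j)
  define N where "N = length V"
  have N1: "1 \<le> N" using Suc.prems(3) by (cases V) (auto simp: N_def)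
  have N1r: "1 \<le> real N" using N1 by simp
  show ?case
  proof (cases "Suc j \<le> 2 \<or> length V < 1024")
    case True
    have "hoare x (pv V r k) (B + 4 * real N powr (3/2)) Q"
      unfolding N_def
    proof (rule pv_hoare[OF Suc.prems(2,3,4)])
      fix w r' assume "consis x r'" "w \<in> set V" "\<forall>z\<in>set V. x z \<le> x w + 2"
      moreover have "(2::real) \<le> real (Suc j)" using Suc.prems(1) by simp
      ultimately show "hoare x (k w r') B Q" using Suc.prems(5) by force
    qed
    moreover have "4 * real N powr (3/2) \<le> 128 * real N powr (1 + 1 / dd (Suc j))"
    proof (cases "Suc j = 2")
      case True
      then have "dd (Suc j) = 2" using dd_2 by metis
      then have "real N powr (1 + 1 / dd (Suc j)) = real N powr (3/2)" by simp
      moreover have "0 \<le> real N powr (3/2)" by simp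
      ultimately show ?thesis by simp
    next
      case False
      then have N2: "N < 1024" using True Suc.prems(1) by (auto simp: N_def)
      have D2: "2 \<le> dd (Suc j)" using Suc.prems(1) by (intro dd_ge2) simp
      have "real N powr (3/2) \<le> sqrt (real N) * real N powr (1 + 1 / dd (Suc j))"
        using small_bound[OF N1r D2] .
      also have "\<dots> \<le> 32 * real N powr (1 + 1 / dd (Suc j))"
      proof (intro mult_right_mono)
        have "real N \<le> 32^2" using N2 by simp
        then have "sqrt (real N) \<le> sqrt (32^2)" by (rule real_sqrt_le_mono)
        also have "sqrt ((32::real)^2) = 32" by (rule real_sqrt_abs[THEN trans]) simp
        finally show "sqrt (real N) \<le> 32" .
      qed simp
      finally show ?thesis by simp
    qed
    ultimately have "hoare x (pv V r k) (B + 128 * real N powr (1 + 1 / dd (Suc j))) Q"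
      using hoare_mono add_le_cancel_left by metis
    then show ?thesis using True by (simp add: N_def)
  next
    case False
    then have j2: "2 \<le> j" and NL: "1024 \<le> N" by (auto simp: N_def)
    define g where "g = gg (Suc j) N"
    have g1: "1 \<le> g" using gg_bounds[OF N1] by (simp add: g_def)
    have gA: "6 * real N powr (1 / dd (Suc j)) \<le> real g" using gg_bounds[OF N1] by (simp add: g_def)
    have gB: "real g \<le> 6 * real N powr (1 / dd (Suc j)) + 1" using gg_bounds[OF N1] by (simp add: g_def)
    have ddS: "dd (Suc j) = 2 * dd j + 1" using dd_Suc[OF j2] .
    have D2: "2 \<le> dd j" using dd_ge2[OF j2] .
    define B0 where "B0 = B + 128 * real N powr (1 + 1 / dd (Suc j)) - (real g - 1) * real N"
    have cov: "hoare x (cover N g V [] r (\<lambda>C r1. algo j C r1 k)) (B0 + (real g - 1) * real (length V)) Q"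
    proof (rule cover_hoare)
      show "length V \<le> N" by (simp add: N_def)
      show "distinct V" using Suc.prems(2) .
      show "distinct ([]::nat list)" by simp
      show "set [] \<inter> set V = {}" by simp
      show "1 \<le> g" using g1 .
      show "consis x r" using Suc.prems(4) .
      fix C r'
      assume cr: "consis x r'" and dC: "distinct C" and sC: "set C \<subseteq> set [] \<union> set V"
        and neC: "V \<noteq> [] \<longrightarrow> C \<noteq> []" and cv: "\<forall>z\<in>set V. \<exists>c\<in>set C. x z \<le> x c + 1"
        and lC: "real (length C) \<le> real (length ([]::nat list)) + 2 * real (length V) / (real g + 1) + real g"
      have neC': "C \<noteq> []" using neC Suc.prems(3) by simp
      have IH: "hoare x (algo j C r' k) (B + 128 * real (length C) powr (1 + 1 / dd j)) Q"
      proof (rule Suc.IH[OF j2 dC neC' cr])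
        fix w r'' assume c2: "consis x r''" and wC: "w \<in> set C" and wm: "\<forall>z\<in>set C. x z \<le> x w + real j"
        have wV: "w \<in> set V" using wC sC by auto
        have "\<forall>z\<in>set V. x z \<le> x w + real (Suc j)"
        proof
          fix z assume "z \<in> set V"
          then obtain c where c: "c \<in> set C" "x z \<le> x c + 1" using cv by blast
          then show "x z \<le> x w + real (Suc j)" using wm by force
        qed
        then show "hoare x (k w r'') B Q" by (rule Suc.prems(5)[OF c2 wV])
      qed
      have lev: "(real g - 1) * real N + 128 * real (length C) powr (1 + 1 / dd j)
          \<le> 128 * real N powr (1 + 1 / (2 * dd j + 1))"
      proof (rule level_bound)
        show "1024 \<le> real N" using NL by simp
        show "2 \<le> dd j" using D2 .
        show "6 * real N powr (1 / (2 * dd j + 1)) \<le> real g" using gA ddS by simp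
        show "real g \<le> 6 * real N powr (1 / (2 * dd j + 1)) + 1" using gB ddS by simp
        show "0 \<le> real (length C)" by simp
        show "real (length C) \<le> 2 * real N / (real g + 1) + real g" using lC by (simp add: N_def)
      qed
      show "hoare x (algo j C r' k) B0 Q"
        by (rule hoare_mono[OF IH]) (use lev ddS in \<open>simp add: B0_def\<close>)
    qed
    have "algo (Suc j) V r k = cover N g V [] r (\<lambda>C r1. algo j C r1 k)"
      using False by (simp add: N_def g_def)
    then show ?thesis using cov by (simp add: B0_def N_def)
  qed
qed

theorem mainTheorem6:
  shows "\<exists>C::real. \<exists>A :: nat \<Rightarrow> nat \<Rightarrow> alg.
     \<forall>k n. 3 \<le> k \<and> real k \<le> log 2 (log 2 (real n)) \<longrightarrow>
       wf_alg n (A k n) \<and>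
       (\<forall>x :: nat \<Rightarrow> real. \<forall>(m, c) \<in> runs x (A k n).
          is_k_max (real k) n x m \<and>
          real c \<le> C * real n powr (1 + 1 / (3 * 2 ^ (k - 2) - 1)))"
proof -
  define A where "A = (\<lambda>k n. algo k [0..<n] (\<lambda>_ _. False) (\<lambda>w r. Leaf w))"
  have main: "wf_alg n (A k n) \<and>
       (\<forall>x :: nat \<Rightarrow> real. \<forall>(m, c) \<in> runs x (A k n).
          is_k_max (real k) n x m \<and>
          real c \<le> 128 * real n powr (1 + 1 / (3 * 2 ^ (k - 2) - 1)))"
    if h: "3 \<le> k \<and> real k \<le> log 2 (log 2 (real n))" for k n
  proof
    have n1: "0 < n"
    proof (rule ccontr)
      assume "\<not> 0 < n"
      then have "n = 0" by simp
      then have "log 2 (log 2 (real n)) = 0" by (simp add: log_def)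
      then show False using h by simp
    qed
    show "wf_alg n (A k n)" unfolding A_def
      by (rule wf_algo) (use n1 in auto)
    show "\<forall>x :: nat \<Rightarrow> real. \<forall>(m, c) \<in> runs x (A k n).
          is_k_max (real k) n x m \<and>
          real c \<le> 128 * real n powr (1 + 1 / (3 * 2 ^ (k - 2) - 1))"
    proof (intro allI ballI)
      fix x :: "nat \<Rightarrow> real" and p assume p: "p \<in> runs x (A k n)"
      have ho: "hoare x (A k n) (0 + 128 * real (length [0..<n]) powr (1 + 1 / dd k)) (\<lambda>m. is_k_max (real k) n x m)"
        unfolding A_def
      proof (rule algo_hoare)
        show "2 \<le> k" using h by simp
        show "distinct [0..<n]" by simp
        show "[0..<n] \<noteq> []" using n1 by simp
        show "consis x (\<lambda>_ _. False)" by (simp add: consis_def)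
        fix w r' assume "consis x r'" and w: "w \<in> set [0..<n]" and wm: "\<forall>z\<in>set [0..<n]. x z \<le> x w + real k"
        show "hoare x (Leaf w) 0 (\<lambda>m. is_k_max (real k) n x m)"
        proof (rule hoare_Leaf)
          show "is_k_max (real k) n x w" unfolding is_k_max_def k_greater_def
            using w wm by force
        qed simp
      qed
      obtain m c where pmc: "p = (m, c)" by (cases p)
      then have "real c \<le> 128 * real n powr (1 + 1 / dd k) \<and> is_k_max (real k) n x m"
        using ho p unfolding hoare_def by auto
      then show "case p of (m, c) \<Rightarrow> is_k_max (real k) n x m \<and>
          real c \<le> 128 * real n powr (1 + 1 / (3 * 2 ^ (k - 2) - 1))"
        using pmc by (simp add: dd_def)
    qed
  qed
  show ?thesis
    by (rule exI[of _ 128], rule exI[of _ A]) (use main in blast)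
qed


end
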